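(* For every integer $k\ge 1$, let $P_k=(p_{ij})$ be the $2^k\times 2^k$ matrix with $p_{ij}=1$ if there is $n\in\{1,\dots,2^k\}$ with $i=\sigma^{-1}_{2^k}(n+1)$ and $j=\sigma^{-1}_{2^k}(n)$ (with the convention $\sigma^{-1}_{2^k}(2^k+1)=\sigma^{-1}_{2^k}(1)$), and $p_{ij}=0$ otherwise. Then $P_k=A_{2^k}$ for every $k\ge 1$.
   Context: For every integer $k\ge 0$ the map $\sigma^{-1}_{2^k}:\{1,\dots,2^k\}\to\{1,\dots,2^k\}$ is defined recursively by $\sigma^{-1}_{2^0}(1)=1$ and, for $k\ge 1$ and $1\le n\le 2^{k-1}$, $\sigma^{-1}_{2^k}(2n-1)=\sigma^{-1}_{2^{k-1}}(n)$ and $\sigma^{-1}_{2^k}(2n)=2^k+1-\sigma^{-1}_{2^{k-1}}(n)$; it is a permutation of $\{1,\dots,2^k\}$ (the inverse of the permutation encoding the ordering of the superstable $2^k$-periodic orbit of a period-doubling cascade of a unimodal map). For $r\ge 1$, $I_r$ denotes the $r\times r$ identity matrix and $I^*_r=(a_{ij})$ the $r\times r$ matrix with $a_{ij}=1$ if $i+j=r+1$ and $a_{ij}=0$ otherwise. The matrices $A_{2^k}$ are defined by $$A_{2}=\begin{pmatrix}0&1\\1&0\end{pmatrix},\quad A_{4}=\begin{pmatrix}0&0&1&0\\0&0&0&1\\0&1&0&0\\1&0&0&0\end{pmatrix},\quad A_{2^k}=\begin{pmatrix}0 & A_{2^{k-2}} & 0\\ 0&0&I_{2^{k-2}}\\ I^*_{2^{k-1}}&0&0\end{pmatrix}\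 (k\ge 3),$$ where in the last block matrix the row blocks have sizes $2^{k-2},2^{k-2},2^{k-1}$ and the column blocks have sizes $2^{k-1},2^{k-2},2^{k-2}$, and $0$ denotes zero blocks. *)

theory Defs
  imports Main
begin

text \<open>Matrices are represented as functions of 1-based row/column indices;
  only indices in the range 1..2^k are meaningful.\<close>

text \<open>sigma_inv k m  is the permutation sigma^{-1}_{2^k} applied to m (1 <= m <= 2^k).\<close>
fun sigma_inv :: "nat \<Rightarrow> nat \<Rightarrow> nat" where
  "sigma_inv 0 m = 1"
| "sigma_inv (Suc k) m =
     (if odd m then sigma_inv k ((m + 1) div 2)
      else 2 ^ Suc k + 1 - sigma_inv k (m div 2))"

definition sigma_inv_cyc :: "nat \<Rightarrow> nat \<Rightarrow> nat" where
  "sigma_inv_cyc k m = (if m = 2 ^ k + 1 then sigma_inv k 1 else sigma_inv k m)"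

definition Pmat :: "nat \<Rightarrow> nat \<Rightarrow> nat \<Rightarrow> int" where
  "Pmat k i j = (if \<exists>n\<in>{1..2 ^ k}. i = sigma_inv_cyc k (n + 1) \<and> j = sigma_inv k n
                 then 1 else 0)"

text \<open>The matrices A_{2^k}, k >= 1, via the block recursion
  (row blocks of sizes 2^(k-2), 2^(k-2), 2^(k-1);
   column blocks of sizes 2^(k-1), 2^(k-2), 2^(k-2)).\<close>
fun Amat :: "nat \<Rightarrow> nat \<Rightarrow> nat \<Rightarrow> int" where
  "Amat 0 i j = (if i = 1 \<and> j = 1 then 1 else 0)"
| "Amat (Suc 0) i j = (if (i = 1 \<and> j = 2) \<or> (i = 2 \<and> j = 1) then 1 else 0)"
| "Amat (Suc (Suc 0)) i j =
     (if (i = 1 \<and> j = 3) \<or> (i = 2 \<and> j = 4) \<or> (i = 3 \<and> j = 2) \<or> (i = 4 \<and> j = 1)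
      then 1 else 0)"
| "Amat (Suc (Suc (Suc k))) i j =
     (let q = 2 ^ Suc k; h = 2 ^ Suc (Suc k); N = 2 ^ Suc (Suc (Suc k)) in
      if 1 \<le> i \<and> i \<le> q \<and> h + 1 \<le> j \<and> j \<le> h + q then Amat (Suc k) i (j - h)
      else if q + 1 \<le> i \<and> i \<le> 2 * q \<and> h + q + 1 \<le> j \<and> j \<le> N then
        (if j - (h + q) = i - q then 1 else 0)
      else if h + 1 \<le> i \<and> i \<le> N \<and> 1 \<le> j \<and> j \<le> h then
        (if (i - h) + j = h + 1 then 1 else 0)
      else 0)"

end

theory Submission
  imports Defs
begin

fun Tm :: "nat \<Rightarrow> nat \<Rightarrow> nat" where
  "Tm 0 j = 1"
| "Tm (Suc k) j = (if j \<le> 2^k then 2^Suc k + 1 - j else Tm k (2^Suc k + 1 - j))"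

lemma s_range: "1 \<le> sigma_inv k m \<and> sigma_inv k m \<le> 2^k"
proof (induction k arbitrary: m)
  case 0 then show ?case by simp
next
  case (Suc k)
  have a: "1 \<le> sigma_inv k ((m + 1) div 2) \<and> sigma_inv k ((m + 1) div 2) \<le> 2^k"
    and b: "1 \<le> sigma_inv k (m div 2) \<and> sigma_inv k (m div 2) \<le> 2^k" using Suc by auto
  show ?case using a b by auto
qed

lemma T_range: "1 \<le> j \<Longrightarrow> j \<le> 2^k \<Longrightarrow> 1 \<le> Tm k j \<and> Tm k j \<le> 2^k"
proof (induction k arbitrary: j)
  case 0 then show ?case by simp
next
  case (Suc k)
  show ?case
  proof (cases "j \<le> 2^k")
    case True then show ?thesis using Suc.prems by auto
  next
    case False
    have "1 \<le> 2^Suc k + 1 - j" "2^Suc k + 1 - j \<le> 2^k" using False Suc.prems by auto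
    from Suc.IH[OF this] False show ?thesis by auto
  qed
qed

lemma T_s: "1 \<le> m \<Longrightarrow> m \<le> 2^k \<Longrightarrow> Tm k (sigma_inv k m) = sigma_inv_cyc k (m+1)"
proof (induction k arbitrary: m)
  case 0 then show ?case by (simp add: sigma_inv_cyc_def)
next
  case (Suc k)
  have pk: "(2::nat)^Suc k = 2 * 2^k" by simp
  show ?case
  proof (cases "odd m")
    case True
    define a where "a = sigma_inv k ((m + 1) div 2)"
    have ar: "1 \<le> a \<and> a \<le> 2^k" using s_range a_def by auto
    have s1: "sigma_inv (Suc k) m = a" using True a_def by simp
    have ne: "m + 1 \<noteq> 2^Suc k + 1" using True by auto
    have s2: "sigma_inv (Suc k) (m+1) = 2^Suc k + 1 - a" using True a_def by simp
    show ?thesis using s1 s2 ne ar by (simp add: sigma_inv_cyc_def)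
  next
    case False
    then obtain n where n: "m = 2*n" by blast
    have n1: "1 \<le> n" "n \<le> 2^k" using n Suc.prems by auto
    define a where "a = sigma_inv k n"
    have ar: "1 \<le> a \<and> a \<le> 2^k" using s_range a_def by auto
    have s1: "sigma_inv (Suc k) m = 2^Suc k + 1 - a" using n a_def by simp
    have T1: "Tm (Suc k) (sigma_inv (Suc k) m) = Tm k a" using s1 ar by auto
    have IH: "Tm k a = sigma_inv_cyc k (n+1)" using Suc.IH[OF n1] a_def by simp
    show ?thesis
    proof (cases "n = 2^k")
      case True
      then show ?thesis using T1 IH n by (simp add: sigma_inv_cyc_def)
    next
      case ne: False
      have "odd (m+1)" using n by simp
      then have "sigma_inv (Suc k) (m+1) = sigma_inv k (n+1)" using n by simp
      moreover have "m + 1 \<noteq> 2^Suc k + 1" using ne n by auto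
      moreover have "n + 1 \<noteq> 2^k + 1" using ne by auto
      ultimately show ?thesis using T1 IH by (simp add: sigma_inv_cyc_def)
    qed
  qed
qed

lemma s_surj: "1 \<le> j \<Longrightarrow> j \<le> 2^k \<Longrightarrow> \<exists>m. 1 \<le> m \<and> m \<le> 2^k \<and> sigma_inv k m = j"
proof (induction k arbitrary: j)
  case 0 then show ?case by (intro exI[of _ 1]) simp
next
  case (Suc k)
  show ?case
  proof (cases "j \<le> 2^k")
    case True
    then obtain n where n: "1 \<le> n" "n \<le> 2^k" "sigma_inv k n = j" using Suc by blast
    have "odd (2*n - 1)" using n by simp
    moreover have "(2*n - 1 + 1) div 2 = n" using n by simp
    ultimately have "sigma_inv (Suc k) (2*n-1) = j" using n by simp
    then show ?thesis using n by (intro exI[of _ "2*n-1"]) auto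
  next
    case False
    have "1 \<le> 2^Suc k + 1 - j" "2^Suc k + 1 - j \<le> 2^k" using False Suc.prems by auto
    then obtain n where n: "1 \<le> n" "n \<le> 2^k" "sigma_inv k n = 2^Suc k + 1 - j" using Suc.IH by blast
    have "sigma_inv (Suc k) (2*n) = j" using n Suc.prems by simp
    then show ?thesis using n by (intro exI[of _ "2*n"]) auto
  qed
qed

lemma P_T: "1 \<le> j \<Longrightarrow> j \<le> 2^k \<Longrightarrow> Pmat k i j = (if i = Tm k j then 1 else 0)"
proof -
  assume j: "1 \<le> j" "j \<le> 2^k"
  have "(\<exists>n\<in>{1..2 ^ k}. i = sigma_inv_cyc k (n + 1) \<and> j = sigma_inv k n) \<longleftrightarrow> i = Tm k j"
  proof
    assume "\<exists>n\<in>{1..2 ^ k}. i = sigma_inv_cyc k (n + 1) \<and> j = sigma_inv k n"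
    then obtain n where "n \<in> {1..2^k}" "i = sigma_inv_cyc k (n + 1)" "j = sigma_inv k n" by blast
    then show "i = Tm k j" using T_s by auto
  next
    assume i: "i = Tm k j"
    obtain m where "1 \<le> m" "m \<le> 2^k" "sigma_inv k m = j" using s_surj j by blast
    then show "\<exists>n\<in>{1..2 ^ k}. i = sigma_inv_cyc k (n + 1) \<and> j = sigma_inv k n"
      using T_s i by (intro bexI[of _ m]) auto
  qed
  then show ?thesis by (simp add: Pmat_def)
qed

lemma A_T: "k \<ge> 1 \<Longrightarrow> 1 \<le> i \<Longrightarrow> i \<le> 2^k \<Longrightarrow> 1 \<le> j \<Longrightarrow> j \<le> 2^k \<Longrightarrow>
   Amat k i j = (if i = Tm k j then 1 else 0)"
proof (induction k i j rule: Amat.induct)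
  case (1 i j) then show ?case by simp
next
  case (2 i j)
  then have "i = 1 \<or> i = 2" "j = 1 \<or> j = 2" by auto
  then show ?case by (elim disjE; simp)
next
  case (3 i j)
  then have "i = 1 \<or> i = 2 \<or> i = 3 \<or> i = 4" "j = 1 \<or> j = 2 \<or> j = 3 \<or> j = 4" by auto
  then show ?case by (elim disjE; simp)
next
  case (4 k i j)
  define q where "q = (2::nat) ^ Suc k"
  have h: "(2::nat) ^ Suc (Suc k) = 2*q" and N: "(2::nat) ^ Suc (Suc (Suc k)) = 4*q"
    by (simp_all add: q_def)
  have q1: "q \<ge> 2" by (simp add: q_def)
  have A: "Amat (Suc (Suc (Suc k))) i j =
      (if 1 \<le> i \<and> i \<le> q \<and> 2*q + 1 \<le> j \<and> j \<le> 2*q + q then Amat (Suc k) i (j - 2*q)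
      else if q + 1 \<le> i \<and> i \<le> 2 * q \<and> 2*q + q + 1 \<le> j \<and> j \<le> 4*q then
        (if j - (2*q + q) = i - q then 1 else 0)
      else if 2*q + 1 \<le> i \<and> i \<le> 4*q \<and> 1 \<le> j \<and> j \<le> 2*q then
        (if (i - 2*q) + j = 2*q + 1 then 1 else 0)
      else 0)"
    by (simp only: Amat.simps Let_def h N q_def[symmetric])
  have T: "Tm (Suc (Suc (Suc k))) j = (if j \<le> 2*q then 4*q + 1 - j else
       (if 4*q+1-j \<le> q then 2*q + 1 - (4*q+1-j) else Tm (Suc k) (2*q + 1 - (4*q+1-j))))"
    by (simp only: Tm.simps h N q_def[symmetric])
  have ij: "1 \<le> i" "i \<le> 4*q" "1 \<le> j" "j \<le> 4*q" using 4(3-6) N by auto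
  consider "j \<le> 2*q" | "2*q < j \<and> j \<le> 3*q" | "3*q < j" by linarith
  then show ?case
  proof cases
    case 1
    have A1: "Amat (Suc (Suc (Suc k))) i j = (if 2*q + 1 \<le> i then
        (if (i - 2*q) + j = 2*q + 1 then 1 else 0) else 0)"
      using A 1 ij by (simp del: Amat.simps)
    have TT: "Tm (Suc (Suc (Suc k))) j = 4*q + 1 - j" using T 1 by (simp del: Tm.simps)
    show ?thesis unfolding A1 TT using 1 ij q1 by auto
  next
    case 2
    have e: "2*q + 1 - (4*q+1-j) = j - 2*q" using 2 ij by auto
    have c: "\<not> (4*q+1-j \<le> q)" using 2 ij by auto
    have rj: "1 \<le> j - 2*q" "j - 2*q \<le> 2^Suc k" using 2 q_def by auto
    have TT: "Tm (Suc (Suc (Suc k))) j = Tm (Suc k) (j - 2*q)" using T e c 2 by auto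
    have tr: "Tm (Suc k) (j - 2*q) \<le> q" using T_range[OF rj] q_def by auto
    show ?thesis
    proof (cases "i \<le> q")
      case True
      have "Amat (Suc k) i (j - 2 ^ Suc (Suc k)) = (if i = Tm (Suc k) (j - 2 ^ Suc (Suc k)) then 1 else 0)"
        apply (rule 4(1)[OF refl refl refl])
        using True ij rj 2 h by (simp_all add: q_def)
      then have "Amat (Suc k) i (j - 2 * q) = (if i = Tm (Suc k) (j - 2*q) then 1 else 0)"
        unfolding h[symmetric] .
      moreover have "Amat (Suc (Suc (Suc k))) i j = Amat (Suc k) i (j - 2*q)"
        using A True 2 ij by simp
      ultimately show ?thesis using TT by simp
    next
      case False
      have A2: "Amat (Suc (Suc (Suc k))) i j = 0"
        using A 2 ij False by (simp del: Amat.simps)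
      show ?thesis unfolding A2 TT using tr False by auto
    qed
  next
    case 3
    have TT: "Tm (Suc (Suc (Suc k))) j = j - 2*q" using T 3 ij by auto
    have A3: "Amat (Suc (Suc (Suc k))) i j = (if q + 1 \<le> i \<and> i \<le> 2 * q then
        (if j - (2*q + q) = i - q then 1 else 0) else 0)"
      using A 3 ij by (simp del: Amat.simps)
    show ?thesis unfolding A3 TT using 3 ij q1 by auto
  qed
qed

theorem theorem2:
  fixes k :: nat
  assumes "k \<ge> 1"
  shows "\<forall>i\<in>{1..2 ^ k}. \<forall>j\<in>{1..2 ^ k}. Pmat k i j = Amat k i j"
  using P_T A_T assms by auto

end
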